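(* Let $k>0$, let $\lambda$ be a $k$-ineffable$'$ cardinal, and let $g:\lambda^k\to\lambda^k$. Then there exists an infinite set $B\subseteq\lambda$ such that $g$ has at most $\mathrm{ot}(k)$ regressive values on $B^k$.
   Context: Ordinals are von Neumann ordinals, ordered by $<$. For $x\in\lambda^k$, $\min(x)$ and $|x|$ are the least and greatest coordinates; $y$ is a regressive value of $g$ on $B^k$ iff $y=g(x)$ for some $x\in B^k$ with $|y|<\min(x)$. $S_k(X)$ is the set of $k$-element subsets of $X$. A function $f:S_k(\lambda)\to\lambda$ is regressive iff for all $A\in S_k(\lambda)$, $f(A)<\min(A)$ or $\min(A)=0$. $\lambda$ is $k$-ineffable$'$ iff $\lambda$ is an infinite cardinal and for every regressive $f:S_k(\lambda)\to\lambda$ there exists a stationary $A\subseteq\lambda$ such that $f$ is constant on $S_k(A)$. $\mathrm{ot}(k)$ is the number of order types of elements of $\mathbb{N}^k$, where $x,y$ have the same order type iff $x_i<x_j\Leftrightarrow y_i<y_j$ for all $i,j$. *)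

theory Defs
  imports Main "HOL-Library.Equipollence"
begin

text \<open>The infinite cardinal lambda is represented by a well-ordered type 'a
  (its elements are the ordinals below lambda).\<close>

definition ord_zero :: "'a::wellorder" where
  "ord_zero = (LEAST x. True)"

definition is_limit :: "'a::wellorder \<Rightarrow> bool" where
  "is_limit a \<longleftrightarrow> a \<noteq> ord_zero \<and> (\<forall>b<a. \<exists>c. b < c \<and> c < a)"

definition club :: "'a::wellorder set \<Rightarrow> bool" where
  "club C \<longleftrightarrow> (\<forall>a. \<exists>b\<in>C. a \<le> b) \<and>
     (\<forall>a. is_limit a \<and> (\<forall>b<a. \<exists>c\<in>C. b \<le> c \<and> c < a) \<longrightarrow> a \<in> C)"

definition stationary :: "'a::wellorder set \<Rightarrow> bool" where
  "stationary A \<longleftrightarrow> (\<forall>C. club C \<longrightarrow> A \<inter> C \<noteq> {})"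

definition is_infinite_cardinal :: "'a::wellorder itself \<Rightarrow> bool" where
  "is_infinite_cardinal _ \<longleftrightarrow> infinite (UNIV :: 'a set) \<and>
     (\<forall>x::'a. \<not> ({y. y < x} \<approx> (UNIV :: 'a set)))"

definition S_k :: "nat \<Rightarrow> 'a set \<Rightarrow> 'a set set" where
  "S_k k X = {A. A \<subseteq> X \<and> finite A \<and> card A = k}"

definition regressive_S :: "nat \<Rightarrow> ('a::wellorder set \<Rightarrow> 'a) \<Rightarrow> bool" where
  "regressive_S k f \<longleftrightarrow> (\<forall>A\<in>S_k k UNIV. f A < Min A \<or> Min A = ord_zero)"

definition k_ineffable' :: "nat \<Rightarrow> 'a::wellorder itself \<Rightarrow> bool" where
  "k_ineffable' k T \<longleftrightarrow> is_infinite_cardinal T \<and>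
     (\<forall>f::'a set \<Rightarrow> 'a. regressive_S k f \<longrightarrow>
        (\<exists>A. stationary A \<and> (\<exists>c. \<forall>X\<in>S_k k A. f X = c)))"

text \<open>Elements of lambda^k are lists of length k; min and |.| are the least and
  greatest coordinates.\<close>
definition regressive_values ::
  "nat \<Rightarrow> ('a::wellorder list \<Rightarrow> 'a list) \<Rightarrow> 'a set \<Rightarrow> 'a list set" where
  "regressive_values k g B = {y. \<exists>x. length x = k \<and> set x \<subseteq> B \<and> y = g x \<and>
       Max (set y) < Min (set x)}"

definition order_type_nat :: "nat list \<Rightarrow> (nat \<times> nat) set" where
  "order_type_nat x = {(i, j). i < length x \<and> j < length x \<and> x ! i < x ! j}"

definition ot :: "nat \<Rightarrow> nat" where
  "ot k = card {order_type_nat x | x. length x = k}"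

end

theory Submission
  imports Defs
begin



lemma ord_zero_le: "ord_zero \<le> (x::'a::wellorder)"
  unfolding ord_zero_def by (rule Least_le) simp

lemma kin_nomax:
  assumes "k_ineffable' k TYPE('a::wellorder)"
  shows "\<exists>w::'a. z < w"
proof (rule ccontr)
  assume "\<not> ?thesis"
  then have le: "\<forall>w. w \<le> z" by (simp add: not_less)
  have inf: "infinite (UNIV::'a set)"
    using assms unfolding k_ineffable'_def is_infinite_cardinal_def by blast
  have eq: "{y. y < z} = UNIV - {z}" using le by (auto simp: order.order_iff_strict)
  have inf2: "infinite (UNIV - {z})" using inf by simp
  have "insert z (UNIV - {z}) \<approx> UNIV - {z}" using infinite_insert_eqpoll[OF inf2] .
  then have "(UNIV::'a set) \<approx> UNIV - {z}" by (simp add: insert_Diff)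
  then have "{y. y < z} \<approx> (UNIV::'a set)" unfolding eq using eqpoll_sym by blast
  then show False using assms unfolding k_ineffable'_def is_infinite_cardinal_def by blast
qed

definition unbdd :: "'a::wellorder set \<Rightarrow> bool" where
  "unbdd A \<longleftrightarrow> (\<forall>z. \<exists>a\<in>A. z < a)"

lemma finite_bdd:
  assumes "finite (P::'a::wellorder set)" "\<And>z::'a. \<exists>w. z < w"
  shows "\<exists>z. \<forall>q\<in>P. q < z"
proof (cases "P = {}")
  case True then show ?thesis by auto
next
  case False
  obtain w where "Max P < w" using assms(2) by blast
  then show ?thesis using Max_ge[OF assms(1)] by (meson le_less_trans)
qed

lemma unbdd_infinite: "unbdd (A::'a::wellorder set) \<Longrightarrow> infinite A"
proof
  assume u: "unbdd A" and f: "finite A"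
  show False
  proof (cases "A = {}")
    case True then show ?thesis using u unfolding unbdd_def by auto
  next
    case False
    obtain a where "a \<in> A" "Max A < a" using u unfolding unbdd_def by blast
    then show ?thesis using Max_ge[OF f] by (simp add: leD)
  qed
qed

lemma extend_set:
  assumes "unbdd (B::'a::wellorder set)" "S \<subseteq> B" "finite S" "card S \<le> k"
  shows "\<exists>X. S \<subseteq> X \<and> X \<subseteq> B \<and> finite X \<and> card X = k \<and> (\<forall>z\<in>X-S. \<forall>s\<in>S. s < z)"
proof -
  define B' where "B' = {b\<in>B. \<forall>s\<in>S. s < b}"
  have "unbdd B'"
    unfolding unbdd_def
  proof
    fix z
    define m where "m = (if S = {} then z else max z (Max S))"
    obtain a where a: "a \<in> B" "m < a" using assms(1) unfolding unbdd_def by blast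
    have "\<forall>s\<in>S. s < a"
    proof
      fix s assume "s \<in> S"
      then have "s \<le> m" using Max_ge[OF assms(3)] unfolding m_def by (auto simp: le_max_iff_disj)
      then show "s < a" using a by simp
    qed
    moreover have "z < a" using a unfolding m_def by (auto split: if_splits)
    ultimately show "\<exists>a\<in>B'. z < a" using a unfolding B'_def by blast
  qed
  then have "infinite B'" by (rule unbdd_infinite)
  then obtain Y where Y: "finite Y" "card Y = k - card S" "Y \<subseteq> B'"
    using infinite_arbitrarily_large by blast
  have disj: "S \<inter> Y = {}" using Y(3) unfolding B'_def by auto
  define X where "X = S \<union> Y"
  have "card X = k" unfolding X_def using card_Un_disjoint[OF assms(3) Y(1) disj] Y(2) assms(4) by simp
  moreover have "\<forall>z\<in>X-S. \<forall>s\<in>S. s < z" using Y(3) unfolding X_def B'_def by auto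
  moreover have "X \<subseteq> B" using Y(3) assms(2) unfolding X_def B'_def by auto
  ultimately show ?thesis using assms(3) Y(1) unfolding X_def by blast
qed

lemma club_tail:
  fixes C :: "'a::wellorder set"
  assumes "club C" "\<And>z::'a::wellorder. \<exists>w. z < w"
  shows "club (C \<inter> {z. t < z})"
  unfolding club_def
proof (intro conjI allI impI)
  fix a
  obtain w where "t < w" using assms(2)[of t] by blast
  obtain b where "b \<in> C" "max a w \<le> b" using assms(1) unfolding club_def by blast
  then show "\<exists>b\<in>C \<inter> {z. t < z}. a \<le> b" using \<open>t < w\<close> by auto
next
  fix a
  assume h: "is_limit a \<and> (\<forall>b<a. \<exists>c\<in>C \<inter> {z. t < z}. b \<le> c \<and> c < a)"
  then have "a \<in> C" using assms(1) unfolding club_def by blast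
  have "a \<noteq> ord_zero" using h unfolding is_limit_def by blast
  then have "ord_zero < a" using ord_zero_le[of a] by simp
  then obtain c where "c \<in> C \<inter> {z. t < z}" "c < a" using h by blast
  then show "a \<in> C \<inter> {z. t < z}" using \<open>a \<in> C\<close> by auto
qed

lemma club_UNIV: "club (UNIV::'a::wellorder set)"
  unfolding club_def by auto

lemma stat_unbdd:
  fixes C :: "'a::wellorder set"
  assumes "stationary A" "club C" "\<And>z::'a::wellorder. \<exists>w. z < w"
  shows "unbdd (A \<inter> C)"
  unfolding unbdd_def
proof
  fix z
  have "club (C \<inter> {w. z < w})" using club_tail assms by blast
  then have "A \<inter> (C \<inter> {w. z < w}) \<noteq> {}" using assms(1) unfolding stationary_def by blast
  then show "\<exists>a\<in>A \<inter> C. z < a" by auto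
qed

lemma reg1:
  assumes "0 < k" "k_ineffable' k TYPE('a::wellorder)" "\<forall>\<alpha>::'a. f \<alpha> < \<alpha> \<or> \<alpha> = ord_zero"
  shows "\<exists>A. unbdd A \<and> (\<exists>c. \<forall>\<alpha>\<in>A. f \<alpha> = c)"
proof -
  have nm: "\<And>z::'a. \<exists>w. z < w" using kin_nomax[OF assms(2)] .
  define F where "F X = f (Min X)" for X :: "'a set"
  have "regressive_S k F" unfolding regressive_S_def F_def using assms(3) by blast
  then obtain A c where A: "stationary A" "\<forall>X\<in>S_k k A. F X = c"
    using assms(2) unfolding k_ineffable'_def by blast
  have uA: "unbdd A" using stat_unbdd[OF A(1) club_UNIV nm] by simp
  have "\<forall>\<alpha>\<in>A. f \<alpha> = c"
  proof
    fix \<alpha> assume "\<alpha> \<in> A"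
    then obtain X where X: "{\<alpha>} \<subseteq> X" "X \<subseteq> A" "finite X" "card X = k" "\<forall>z\<in>X-{\<alpha>}. \<alpha> < z"
      using extend_set[OF uA, of "{\<alpha>}" k] assms(1) by auto
    have "Min X = \<alpha>" using X by (intro Min_eqI) (auto simp: order.order_iff_strict)
    moreover have "X \<in> S_k k A" unfolding S_k_def using X by auto
    ultimately show "f \<alpha> = c" using A(2) unfolding F_def by force
  qed
  then show ?thesis using uA by blast
qed




lemma bdd_inj:
  fixes h :: "'b \<Rightarrow> 'a::wellorder" and e :: "'b \<Rightarrow> 'a"
  assumes "0 < k" "k_ineffable' k TYPE('a)" "inj_on e D" "\<forall>d\<in>D. e d < \<beta>"
  shows "\<exists>z. \<forall>d\<in>D. h d < z"
proof (rule ccontr)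
  assume "\<not> ?thesis"
  then have ub: "\<forall>z. \<exists>d\<in>D. z \<le> h d" by (meson not_less)
  define f where "f \<alpha> = (if \<beta> < \<alpha> then (LEAST w. \<exists>d\<in>D. e d = w \<and> \<alpha> \<le> h d) else ord_zero)" for \<alpha>
  have fprop: "\<exists>d\<in>D. e d = f \<alpha> \<and> \<alpha> \<le> h d" if "\<beta> < \<alpha>" for \<alpha>
  proof -
    have "\<exists>w. \<exists>d\<in>D. e d = w \<and> \<alpha> \<le> h d" using ub by blast
    from LeastI_ex[OF this] show ?thesis unfolding f_def using that by simp
  qed
  have "\<forall>\<alpha>. f \<alpha> < \<alpha> \<or> \<alpha> = ord_zero"
  proof
    fix \<alpha>
    show "f \<alpha> < \<alpha> \<or> \<alpha> = ord_zero"
    proof (cases "\<beta> < \<alpha>")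
      case True
      then obtain d where d: "d \<in> D" "e d = f \<alpha>" using fprop by blast
      then have "e d < \<beta>" using assms(4) by blast
      then show ?thesis using True d(2) by (metis less_trans)
    next
      case False
      then show ?thesis unfolding f_def using ord_zero_le[of \<alpha>] by (auto simp: order.order_iff_strict)
    qed
  qed
  then obtain A c where A: "unbdd A" "\<forall>\<alpha>\<in>A. f \<alpha> = c" using reg1[OF assms(1,2)] by blast
  obtain \<alpha>0 where a0: "\<alpha>0 \<in> A" "\<beta> < \<alpha>0" using A(1) unfolding unbdd_def by blast
  have "f \<alpha>0 = c" using A(2) a0(1) by blast
  then obtain d0 where d0: "d0 \<in> D" "e d0 = c" "\<alpha>0 \<le> h d0" using fprop[OF a0(2)] by blast
  obtain \<alpha>1 where a1: "\<alpha>1 \<in> A" "max \<beta> (h d0) < \<alpha>1" using A(1) unfolding unbdd_def by blast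
  have "\<beta> < \<alpha>1" using a1(2) by simp
  then obtain d1 where d1: "d1 \<in> D" "e d1 = f \<alpha>1" "\<alpha>1 \<le> h d1" using fprop by blast
  have "f \<alpha>1 = c" using A(2) a1(1) by blast
  have "d1 = d0" using assms(3) d0 d1 \<open>f \<alpha>1 = c\<close> unfolding inj_on_def by metis
  have "h d0 < \<alpha>1" using a1(2) by simp
  then show False using d1(3) \<open>d1 = d0\<close> by (meson leD)
qed



lemma bdd_seq:
  fixes a :: "nat \<Rightarrow> 'a::wellorder"
  assumes "0 < k" "k_ineffable' k TYPE('a)" "strict_mono a"
  shows "\<exists>z. \<forall>n. a n < z"
proof (rule ccontr)
  assume "\<not> ?thesis"
  then have ub: "\<forall>z. \<exists>n. z \<le> a n" by (meson not_less)
  define f where "f \<alpha> = (if a 0 < \<alpha> then a (LEAST n. \<alpha> \<le> a (Suc n)) else ord_zero)" for \<alpha>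
  have fprop: "\<alpha> \<le> a (Suc (LEAST n. \<alpha> \<le> a (Suc n))) \<and> a (LEAST n. \<alpha> \<le> a (Suc n)) < \<alpha>"
    if "a 0 < \<alpha>" for \<alpha>
  proof -
    obtain m where m: "\<alpha> \<le> a m" using ub by blast
    have "m \<noteq> 0" using m that by (metis leD)
    then have ex: "\<exists>n. \<alpha> \<le> a (Suc n)" using m by (intro exI[of _ "m - 1"]) simp
    let ?n = "LEAST n. \<alpha> \<le> a (Suc n)"
    have 1: "\<alpha> \<le> a (Suc ?n)" using LeastI_ex[OF ex] .
    have 2: "a ?n < \<alpha>"
    proof (cases "?n = 0")
      case True then show ?thesis using that by simp
    next
      case False
      then have "\<not> \<alpha> \<le> a (Suc (?n - 1))" by (intro not_less_Least) auto
      then show ?thesis using False by simp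
    qed
    show ?thesis using 1 2 by blast
  qed
  have "\<forall>\<alpha>. f \<alpha> < \<alpha> \<or> \<alpha> = ord_zero"
  proof
    fix \<alpha>
    show "f \<alpha> < \<alpha> \<or> \<alpha> = ord_zero"
    proof (cases "a 0 < \<alpha>")
      case True
      then show ?thesis using fprop unfolding f_def by simp
    next
      case False
      then show ?thesis unfolding f_def using ord_zero_le[of \<alpha>] by (auto simp: order.order_iff_strict)
    qed
  qed
  then obtain A c where A: "unbdd A" "\<forall>\<alpha>\<in>A. f \<alpha> = c" using reg1[OF assms(1,2)] by blast
  obtain \<alpha>0 where a0: "\<alpha>0 \<in> A" "a 0 < \<alpha>0" using A(1) unfolding unbdd_def by blast
  define n0 where "n0 = (LEAST n. \<alpha>0 \<le> a (Suc n))"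
  have "f \<alpha>0 = c" using A(2) a0(1) by blast
  then have c0: "c = a n0" using a0(2) unfolding f_def n0_def by simp
  obtain \<alpha>1 where a1: "\<alpha>1 \<in> A" "max (a 0) (a (Suc n0)) < \<alpha>1" using A(1) unfolding unbdd_def by blast
  define n1 where "n1 = (LEAST n. \<alpha>1 \<le> a (Suc n))"
  have "a 0 < \<alpha>1" using a1 by simp
  moreover have "f \<alpha>1 = c" using A(2) a1(1) by blast
  ultimately have c1: "c = a n1" "\<alpha>1 \<le> a (Suc n1)" using fprop[of \<alpha>1] unfolding f_def n1_def by simp_all
  have "n1 = n0" using c0 c1(1) strict_mono_eq[OF assms(3)] by simp
  have "a (Suc n0) < \<alpha>1" using a1(2) by simp
  then show False using c1(2) \<open>n1 = n0\<close> by (meson leD)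
qed



definition clos :: "('a \<times> 'a \<Rightarrow> 'a) \<Rightarrow> 'a::wellorder set" where
  "clos p = {\<alpha>. \<forall>x y. x < \<alpha> \<longrightarrow> y < \<alpha> \<longrightarrow> p (x, y) < \<alpha>}"

lemma sq_bdd:
  fixes p :: "'a \<times> 'a \<Rightarrow> 'a::wellorder"
  assumes "0 < k" "k_ineffable' k TYPE('a)"
  shows "\<exists>z. \<forall>x y. x \<le> a \<longrightarrow> y \<le> a \<longrightarrow> p (x, y) < z"
proof (cases "finite {..a}")
  case True
  have "finite (p ` ({..a} \<times> {..a}))" using True by simp
  from finite_bdd[OF this kin_nomax[OF assms(2)]]
  obtain z where "\<forall>q\<in>p ` ({..a} \<times> {..a}). q < z" by blast
  then show ?thesis by auto
next
  case False
  then obtain e0 where e0: "bij_betw e0 ({..a} \<times> {..a}) {..a}"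
    using card_of_Times_same_infinite card_of_ordIso by blast
  obtain s where s: "a < s" using kin_nomax[OF assms(2)] by blast
  have "\<forall>d\<in>{..a} \<times> {..a}. e0 d < s"
  proof
    fix d assume "d \<in> {..a} \<times> {..a}"
    then have "e0 d \<in> {..a}" using bij_betw_apply[OF e0] by blast
    then show "e0 d < s" using s by (simp add: le_less_trans)
  qed
  then obtain z where "\<forall>d\<in>{..a} \<times> {..a}. p d < z"
    using bdd_inj[OF assms(1,2), of e0 "{..a} \<times> {..a}" s p] e0 unfolding bij_betw_def by blast
  then show ?thesis by auto
qed



fun enc :: "('a \<times> 'a \<Rightarrow> 'a) \<Rightarrow> 'a::wellorder list \<Rightarrow> 'a" where
  "enc p [] = ord_zero"
| "enc p (x # l) = p (x, enc p l)"

lemma enc_lt: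
  assumes "\<alpha> \<in> clos p" "\<alpha> \<noteq> ord_zero" "\<forall>x\<in>set l. x < \<alpha>"
  shows "enc p l < \<alpha>"
  using assms(3)
proof (induction l)
  case Nil
  have "ord_zero \<le> \<alpha>" by (rule ord_zero_le)
  then show ?case using assms(2) by simp
next
  case (Cons x l)
  then have "x < \<alpha>" "enc p l < \<alpha>" by simp_all
  then show ?case using assms(1) unfolding clos_def by simp
qed

lemma enc_inj:
  assumes "inj p"
  shows "length l1 = length l2 \<Longrightarrow> enc p l1 = enc p l2 \<Longrightarrow> l1 = l2"
proof (induction l1 arbitrary: l2)
  case Nil
  then show ?case by simp
next
  case (Cons x l)
  then obtain y l' where l2: "l2 = y # l'" by (cases l2) auto
  then have "p (x, enc p l) = p (y, enc p l')" using Cons.prems by simp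
  then have "x = y" "enc p l = enc p l'" using assms unfolding inj_def by blast+
  moreover have "length l = length l'" using Cons.prems l2 by simp
  ultimately show ?case using Cons.IH l2 by simp
qed


lemma clos_club:
  fixes p :: "'a \<times> 'a \<Rightarrow> 'a::wellorder"
  assumes "0 < k" "k_ineffable' k TYPE('a)"
  shows "club (clos p)"
  unfolding club_def
proof (intro conjI allI impI)
  fix t :: 'a
  define step where "step b = (LEAST z. b < z \<and> (\<forall>x y. x \<le> b \<longrightarrow> y \<le> b \<longrightarrow> p (x, y) < z))" for b
  have stepP: "b < step b \<and> (\<forall>x y. x \<le> b \<longrightarrow> y \<le> b \<longrightarrow> p (x, y) < step b)" for b
  proof -
    obtain z1 where z1: "\<forall>x y. x \<le> b \<longrightarrow> y \<le> b \<longrightarrow> p (x, y) < z1" using sq_bdd[OF assms] by blast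
    obtain w where "b < w" using kin_nomax[OF assms(2)] by blast
    then have "\<exists>z. b < z \<and> (\<forall>x y. x \<le> b \<longrightarrow> y \<le> b \<longrightarrow> p (x, y) < z)"
      using z1 by (intro exI[of _ "max z1 w"]) (simp add: less_max_iff_disj)
    from LeastI_ex[OF this] show ?thesis unfolding step_def .
  qed
  define a where "a n = rec_nat t (\<lambda>_ b. step b) n" for n
  have aS: "a (Suc n) = step (a n)" for n unfolding a_def by simp
  have a0: "a 0 = t" unfolding a_def by simp
  have sm: "strict_mono a" unfolding strict_mono_Suc_iff using stepP aS by simp
  obtain z where z: "\<forall>n. a n < z" using bdd_seq[OF assms sm] by blast
  define \<alpha> where "\<alpha> = (LEAST z. \<forall>n. a n \<le> z)"
  have ex: "\<exists>z. \<forall>n. a n \<le> z" using z less_imp_le by blast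
  have al: "\<forall>n. a n \<le> \<alpha>" using LeastI_ex[OF ex] unfolding \<alpha>_def .
  have below: "\<exists>n. x < a n" if "x < \<alpha>" for x
  proof (rule ccontr)
    assume "\<not> (\<exists>n. x < a n)"
    then have "\<forall>n. a n \<le> x" by (simp add: not_less)
    then have "\<alpha> \<le> x" unfolding \<alpha>_def by (rule Least_le)
    then show False using that by simp
  qed
  have "\<alpha> \<in> clos p"
    unfolding clos_def
  proof (intro CollectI allI impI)
    fix x y assume "x < \<alpha>" "y < \<alpha>"
    then obtain n m where "x < a n" "y < a m" using below by blast
    have "a n \<le> a (max n m)" "a m \<le> a (max n m)" using strict_mono_less_eq[OF sm] by simp_all
    then have "x \<le> a (max n m)" "y \<le> a (max n m)" using \<open>x < a n\<close> \<open>y < a m\<close> by simp_all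
    then have "p (x, y) < a (Suc (max n m))" using stepP aS by simp
    then show "p (x, y) < \<alpha>" using al by (meson less_le_trans)
  qed
  moreover have "t \<le> \<alpha>" using al[rule_format, of 0] a0 by simp
  ultimately show "\<exists>b\<in>clos p. t \<le> b" by blast
next
  fix \<alpha> :: 'a
  assume h: "is_limit \<alpha> \<and> (\<forall>b<\<alpha>. \<exists>c\<in>clos p. b \<le> c \<and> c < \<alpha>)"
  show "\<alpha> \<in> clos p"
    unfolding clos_def
  proof (intro CollectI allI impI)
    fix x y assume xy: "x < \<alpha>" "y < \<alpha>"
    then have "max x y < \<alpha>" by simp
    then obtain c' where c': "max x y < c'" "c' < \<alpha>" using h unfolding is_limit_def by blast
    then obtain c where c: "c \<in> clos p" "c' \<le> c" "c < \<alpha>" using h by blast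
    then have "x < c" "y < c" using c' by auto
    then have "p (x, y) < c" using c(1) unfolding clos_def by blast
    then show "p (x, y) < \<alpha>" using c(3) by simp
  qed
qed




definition rk :: "'a::linorder set \<Rightarrow> 'a \<Rightarrow> nat" where
  "rk X v = card {u\<in>X. u < v}"

definition elt :: "'a::linorder set \<Rightarrow> nat \<Rightarrow> 'a" where
  "elt X n = (THE v. v \<in> X \<and> rk X v = n)"

lemma rk_mono:
  assumes "finite X" "v \<in> X" "w \<in> X" "v < w"
  shows "rk X v < rk X w"
proof -
  have "{u\<in>X. u < v} \<subset> {u\<in>X. u < w}" using assms by auto
  then show ?thesis unfolding rk_def using assms(1) by (intro psubset_card_mono) auto
qed

lemma rk_inj: "finite X \<Longrightarrow> inj_on (rk X) X"
  unfolding inj_on_def by (metis linorder_neqE rk_mono less_irrefl)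

lemma rk_lt:
  assumes "finite X" "v \<in> X"
  shows "rk X v < card X"
proof -
  have "{u\<in>X. u < v} \<subset> X" using assms by auto
  then show ?thesis unfolding rk_def using assms(1) by (intro psubset_card_mono) auto
qed

lemma rk_image:
  assumes "finite X"
  shows "rk X ` X = {0..<card X}"
proof (rule card_subset_eq)
  show "finite {0..<card X}" by simp
  show "rk X ` X \<subseteq> {0..<card X}" using rk_lt[OF assms] by auto
  show "card (rk X ` X) = card {0..<card X}" using card_image[OF rk_inj[OF assms]] by simp
qed

lemma elt_rk:
  assumes "finite X" "v \<in> X"
  shows "elt X (rk X v) = v"
  unfolding elt_def
proof (rule the_equality)
  show "v \<in> X \<and> rk X v = rk X v" using assms by simp
  fix w assume "w \<in> X \<and> rk X w = rk X v"
  then show "w = v" using rk_inj[OF assms(1)] assms(2) unfolding inj_on_def by blast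
qed

lemma rk_initial:
  assumes "S \<subseteq> X" "\<forall>z\<in>X-S. \<forall>s\<in>S. s < z" "v \<in> S"
  shows "rk X v = rk S v"
proof -
  have "{u\<in>X. u < v} = {u\<in>S. u < v}"
  proof (rule set_eqI, rule iffI)
    fix u assume u: "u \<in> {u\<in>X. u < v}"
    show "u \<in> {u\<in>S. u < v}"
    proof (rule ccontr)
      assume "u \<notin> {u\<in>S. u < v}"
      then have "u \<in> X - S" using u by auto
      then have "v < u" using assms(2,3) by blast
      then show False using u less_asym by blast
    qed
  next
    fix u assume "u \<in> {u\<in>S. u < v}"
    then show "u \<in> {u\<in>X. u < v}" using assms(1) by auto
  qed
  then show ?thesis unfolding rk_def by simp
qed

definition pats :: "nat \<Rightarrow> nat list set" where
  "pats k = {\<tau>. length \<tau> = k \<and> set \<tau> = {0..<card (set \<tau>)}}"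

lemma pats_finite: "finite (pats k)"
proof -
  have "pats k \<subseteq> {\<tau>. set \<tau> \<subseteq> {0..<k} \<and> length \<tau> = k}"
  proof
    fix \<tau> assume "\<tau> \<in> pats k"
    then have "length \<tau> = k" "set \<tau> = {0..<card (set \<tau>)}" unfolding pats_def by auto
    moreover have "card (set \<tau>) \<le> length \<tau>" by (rule card_length)
    moreover have "x < card (set \<tau>)" if "x \<in> set \<tau>" for x
      using that \<open>set \<tau> = {0..<card (set \<tau>)}\<close> by (metis atLeastLessThan_iff)
    ultimately have "set \<tau> \<subseteq> {0..<k}"
      by (metis atLeastLessThan_iff le0 order_less_le_trans subsetI)
    then show "\<tau> \<in> {\<tau>. set \<tau> \<subseteq> {0..<k} \<and> length \<tau> = k}" using \<open>length \<tau> = k\<close> by blast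
  qed
  moreover have "finite {\<tau>. set \<tau> \<subseteq> {0..<k} \<and> length \<tau> = k}"
    by (rule finite_lists_length_eq) simp
  ultimately show ?thesis by (rule finite_subset)
qed

lemma below_set:
  fixes \<tau> :: "nat list"
  assumes "set \<tau> = {0..<m}" "i < length \<tau>"
  shows "{\<tau>!j | j. j < length \<tau> \<and> \<tau>!j < \<tau>!i} = {0..<\<tau>!i}"
proof (rule set_eqI, rule iffI)
  fix n assume "n \<in> {\<tau>!j | j. j < length \<tau> \<and> \<tau>!j < \<tau>!i}"
  then show "n \<in> {0..<\<tau>!i}" by auto
next
  fix n assume n: "n \<in> {0..<\<tau>!i}"
  have "\<tau>!i \<in> set \<tau>" using assms(2) by simp
  then have "\<tau>!i < m" using assms(1) by simp
  then have "n \<in> set \<tau>" using n assms(1) by simp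
  then obtain j where "j < length \<tau>" "\<tau>!j = n" by (auto simp: in_set_conv_nth)
  then show "n \<in> {\<tau>!j | j. j < length \<tau> \<and> \<tau>!j < \<tau>!i}" using n by auto
qed

lemma pats_inj: "inj_on order_type_nat (pats k)"
proof (rule inj_onI)
  fix \<tau> \<sigma> assume t: "\<tau> \<in> pats k" and s: "\<sigma> \<in> pats k" and eq: "order_type_nat \<tau> = order_type_nat \<sigma>"
  have lt: "length \<tau> = k" "set \<tau> = {0..<card (set \<tau>)}" using t unfolding pats_def by auto
  have ls: "length \<sigma> = k" "set \<sigma> = {0..<card (set \<sigma>)}" using s unfolding pats_def by auto
  have cmp: "\<tau>!j < \<tau>!i \<longleftrightarrow> \<sigma>!j < \<sigma>!i" if "i < k" "j < k" for i j
  proof -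
    have "(j, i) \<in> order_type_nat \<tau> \<longleftrightarrow> (j, i) \<in> order_type_nat \<sigma>" using eq by simp
    then show ?thesis unfolding order_type_nat_def using that lt(1) ls(1) by simp
  qed
  have main: "\<forall>i. i < k \<longrightarrow> \<tau>!i = n \<longrightarrow> \<sigma>!i = n" for n
  proof (induction n rule: less_induct)
    case (less n)
    show ?case
    proof (intro allI impI)
      fix i assume i: "i < k" "\<tau>!i = n"
      have "{0..<\<sigma>!i} = {\<sigma>!j | j. j < length \<sigma> \<and> \<sigma>!j < \<sigma>!i}"
        using below_set[OF ls(2)] i ls(1) by simp
      also have "\<dots> = {\<tau>!j | j. j < length \<tau> \<and> \<tau>!j < \<tau>!i}"
      proof (rule set_eqI, rule iffI)
        fix v assume "v \<in> {\<sigma>!j | j. j < length \<sigma> \<and> \<sigma>!j < \<sigma>!i}"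
        then obtain j where j: "j < k" "\<sigma>!j < \<sigma>!i" "v = \<sigma>!j" using ls(1) by auto
        then have "\<tau>!j < \<tau>!i" using cmp i(1) by blast
        then have "\<sigma>!j = \<tau>!j" using less.IH i(2) j(1) by blast
        then show "v \<in> {\<tau>!j | j. j < length \<tau> \<and> \<tau>!j < \<tau>!i}" using j \<open>\<tau>!j < \<tau>!i\<close> lt(1) by auto
      next
        fix v assume "v \<in> {\<tau>!j | j. j < length \<tau> \<and> \<tau>!j < \<tau>!i}"
        then obtain j where j: "j < k" "\<tau>!j < \<tau>!i" "v = \<tau>!j" using lt(1) by auto
        then have "\<sigma>!j < \<sigma>!i" using cmp i(1) by blast
        have "\<sigma>!j = \<tau>!j" using less.IH i(2) j(1,2) by blast
        then have "v = \<sigma>!j \<and> j < length \<sigma> \<and> \<sigma>!j < \<sigma>!i" using j \<open>\<sigma>!j < \<sigma>!i\<close> ls(1) by simp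
        then show "v \<in> {\<sigma>!j | j. j < length \<sigma> \<and> \<sigma>!j < \<sigma>!i}" by blast
      qed
      also have "\<dots> = {0..<\<tau>!i}" using below_set[OF lt(2), of i] i lt(1) by simp
      finally have "{0..<\<sigma>!i} = {0..<n}" using i(2) by simp
      then show "\<sigma>!i = n" by (metis atLeast0LessThan lessThan_eq_iff)
    qed
  qed
  show "\<tau> = \<sigma>"
  proof (rule nth_equalityI)
    show "length \<tau> = length \<sigma>" using lt ls by simp
    fix i assume "i < length \<tau>"
    then show "\<tau>!i = \<sigma>!i" using main lt(1) by simp
  qed
qed

lemma card_pats: "card (pats k) \<le> ot k"
proof -
  let ?B = "{order_type_nat x | x. length x = k}"
  have "?B \<subseteq> Pow ({0..<k} \<times> {0..<k})" unfolding order_type_nat_def by auto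
  then have fB: "finite ?B" by (rule finite_subset) simp
  have "order_type_nat ` pats k \<subseteq> ?B" unfolding pats_def by auto
  then show ?thesis unfolding ot_def using card_inj_on_le[OF pats_inj _ fB] by blast
qed




theorem lemma4p10:
  fixes k :: nat and g :: "'a::wellorder list \<Rightarrow> 'a list"
  assumes "k > 0"
    and "k_ineffable' k TYPE('a)"
    and "\<forall>x. length x = k \<longrightarrow> length (g x) = k"
  shows "\<exists>B::'a set. infinite B \<and> finite (regressive_values k g B) \<and>
           card (regressive_values k g B) \<le> ot k"
proof -
  have kpos: "0 < k" using assms(1) .
  have nm: "\<And>z::'a. \<exists>w. z < w" using kin_nomax[OF assms(2)] .
  have infU: "infinite (UNIV::'a set)"
    using assms(2) unfolding k_ineffable'_def is_infinite_cardinal_def by blast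
  have "\<exists>f. bij_betw f ((UNIV::'a set) \<times> (UNIV::'a set)) (UNIV::'a set)"
    using card_of_Times_same_infinite[OF infU] card_of_ordIso[of "(UNIV::'a set) \<times> (UNIV::'a set)" "UNIV::'a set"] by simp
  then obtain p0 where "bij_betw p0 ((UNIV::'a set) \<times> (UNIV::'a set)) (UNIV::'a set)" by blast
  then have injp: "inj p0" by (simp add: bij_betw_def)
  define p where "p = p0"
  have injp': "inj p" using injp unfolding p_def .
  obtain Tl where Tl: "set Tl = pats k" using finite_list[OF pats_finite] by blast
  define xt where "xt \<tau> X = map (elt X) \<tau>" for \<tau> :: "nat list" and X :: "'a set"
  define h where "h \<tau> X = (if Max (set (g (xt \<tau> X))) < Min X then g (xt \<tau> X) else replicate k ord_zero)"
    for \<tau> X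
  have hlen: "length (h \<tau> X) = k" if "\<tau> \<in> pats k" for \<tau> X
  proof -
    have "length \<tau> = k" using that unfolding pats_def by blast
    then have "length (xt \<tau> X) = k" unfolding xt_def by simp
    then show ?thesis unfolding h_def using assms(3) by simp
  qed
  have hlt: "\<forall>a\<in>set (h \<tau> X). a < Min X" if "Min X \<noteq> ord_zero" for \<tau> X
  proof
    fix a assume a: "a \<in> set (h \<tau> X)"
    show "a < Min X"
    proof (cases "Max (set (g (xt \<tau> X))) < Min X")
      case True
      then have "a \<in> set (g (xt \<tau> X))" using a unfolding h_def by simp
      then have "a \<le> Max (set (g (xt \<tau> X)))" by simp
      then show ?thesis using True by simp
    next
      case False
      then have "a = ord_zero" using a unfolding h_def by simp
      then show ?thesis using that ord_zero_le[of "Min X"] by simp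
    qed
  qed
  define F where "F X = (if Min X \<in> clos p \<and> Min X \<noteq> ord_zero
                         then enc p (map (\<lambda>\<tau>. enc p (h \<tau> X)) Tl) else ord_zero)" for X
  have "regressive_S k F"
    unfolding regressive_S_def
  proof
    fix X :: "'a set"
    show "F X < Min X \<or> Min X = ord_zero"
    proof (cases "Min X \<in> clos p \<and> Min X \<noteq> ord_zero")
      case True
      have "\<forall>a\<in>set (map (\<lambda>\<tau>. enc p (h \<tau> X)) Tl). a < Min X"
      proof
        fix a assume "a \<in> set (map (\<lambda>\<tau>. enc p (h \<tau> X)) Tl)"
        then obtain \<tau> where "a = enc p (h \<tau> X)" by auto
        moreover have "enc p (h \<tau> X) < Min X"
          using enc_lt[of "Min X" p "h \<tau> X"] True hlt[of X \<tau>] by blast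
        ultimately show "a < Min X" by simp
      qed
      then have "enc p (map (\<lambda>\<tau>. enc p (h \<tau> X)) Tl) < Min X"
        using enc_lt[of "Min X" p] True by blast
      then show ?thesis unfolding F_def using True by simp
    next
      case False
      then have "F X = ord_zero" unfolding F_def by (simp only: if_False)
      moreover have "ord_zero < Min X \<or> ord_zero = Min X"
        using ord_zero_le[of "Min X"] unfolding order_le_less .
      ultimately show ?thesis by auto
    qed
  qed
  then obtain A c where A: "stationary A" "\<forall>X\<in>S_k k A. F X = c"
    using assms(2) unfolding k_ineffable'_def by blast
  define B where "B = A \<inter> clos p - {ord_zero}"
  have uAC: "unbdd (A \<inter> clos p)" using stat_unbdd[OF A(1) clos_club[OF kpos assms(2)] nm] .
  have uB: "unbdd B"
    unfolding unbdd_def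
  proof
    fix z
    obtain a where "a \<in> A \<inter> clos p" "z < a" using uAC unfolding unbdd_def by blast
    moreover have "a \<noteq> ord_zero" using \<open>z < a\<close> ord_zero_le[of z] by auto
    ultimately show "\<exists>a\<in>B. z < a" unfolding B_def by blast
  qed
  have infB: "infinite B" using unbdd_infinite[OF uB] .
  obtain X0 where X0: "finite X0" "card X0 = k" "X0 \<subseteq> B"
    using infinite_arbitrarily_large[OF infB] by blast
  have goodX: "Min X \<in> clos p \<and> Min X \<noteq> ord_zero \<and> F X = c"
    if "finite X" "card X = k" "X \<subseteq> B" for X
  proof -
    have "X \<noteq> {}" using that kpos by auto
    then have "Min X \<in> B" using that Min_in by blast
    moreover have "X \<in> S_k k A" using that unfolding S_k_def B_def by auto
    ultimately show ?thesis using A(2) unfolding B_def by blast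
  qed
  have key: "h \<tau> X = h \<tau> X0" if "finite X" "card X = k" "X \<subseteq> B" "\<tau> \<in> pats k" for X \<tau>
  proof -
    have gX: "Min X \<in> clos p \<and> Min X \<noteq> ord_zero \<and> F X = c" using goodX that by blast
    have gX0: "Min X0 \<in> clos p \<and> Min X0 \<noteq> ord_zero \<and> F X0 = c" using goodX X0 by blast
    have e1: "F X = enc p (map (\<lambda>\<tau>. enc p (h \<tau> X)) Tl)"
      unfolding F_def using gX by (intro if_P) blast
    have e2: "F X0 = enc p (map (\<lambda>\<tau>. enc p (h \<tau> X0)) Tl)"
      unfolding F_def using gX0 by (intro if_P) blast
    have "enc p (map (\<lambda>\<tau>. enc p (h \<tau> X)) Tl) = enc p (map (\<lambda>\<tau>. enc p (h \<tau> X0)) Tl)"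
      using gX gX0 e1 e2 by metis
    then have "map (\<lambda>\<tau>. enc p (h \<tau> X)) Tl = map (\<lambda>\<tau>. enc p (h \<tau> X0)) Tl"
      using enc_inj[OF injp', of "map (\<lambda>\<tau>. enc p (h \<tau> X)) Tl" "map (\<lambda>\<tau>. enc p (h \<tau> X0)) Tl"] by simp
    then have "enc p (h \<tau> X) = enc p (h \<tau> X0)" using that(4) Tl by (simp add: map_eq_conv)
    then show ?thesis using enc_inj[OF injp'] hlen[OF that(4)] by simp
  qed
  have sub: "regressive_values k g B \<subseteq> (\<lambda>\<tau>. h \<tau> X0) ` pats k"
  proof
    fix y assume "y \<in> regressive_values k g B"
    then obtain x where x: "length x = k" "set x \<subseteq> B" "y = g x" "Max (set y) < Min (set x)"
      unfolding regressive_values_def by blast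
    define S where "S = set x"
    have fS: "finite S" unfolding S_def by simp
    have cS: "card S \<le> k" unfolding S_def using card_length[of x] x(1) by simp
    have neS: "S \<noteq> {}" unfolding S_def using x(1) kpos by auto
    obtain X where X: "S \<subseteq> X" "X \<subseteq> B" "finite X" "card X = k" "\<forall>z\<in>X-S. \<forall>s\<in>S. s < z"
      using extend_set[OF uB _ fS cS] x(2) unfolding S_def by blast
    define \<tau> where "\<tau> = map (rk S) x"
    have "set \<tau> = rk S ` S" unfolding \<tau>_def S_def by simp
    then have st: "set \<tau> = {0..<card S}" using rk_image[OF fS] by simp
    then have "card (set \<tau>) = card S" by simp
    moreover have "length \<tau> = k" using x(1) unfolding \<tau>_def by simp
    ultimately have tp: "\<tau> \<in> pats k" unfolding pats_def using st by simp
    have xtx: "xt \<tau> X = x"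
    proof -
      have "elt X (rk S v) = v" if "v \<in> set x" for v
      proof -
        have "v \<in> S" using that unfolding S_def .
        then have "rk S v = rk X v" using rk_initial[OF X(1) X(5)] by simp
        moreover have "v \<in> X" using \<open>v \<in> S\<close> X(1) by blast
        ultimately show ?thesis using elt_rk[OF X(3)] by simp
      qed
      then show ?thesis unfolding xt_def \<tau>_def by (simp add: map_idI)
    qed
    have minX: "Min X = Min S"
    proof (rule Min_eqI[OF X(3)])
      show "Min S \<in> X" using Min_in[OF fS neS] X(1) by blast
      fix z assume z: "z \<in> X"
      show "Min S \<le> z"
      proof (cases "z \<in> S")
        case True then show ?thesis using Min_le[OF fS] by blast
      next
        case False
        then have "Min S < z" using X(5) z Min_in[OF fS neS] by blast
        then show ?thesis by simp
      qed
    qed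
    have "h \<tau> X = y" unfolding h_def xtx using x(3,4) minX unfolding S_def by simp
    then have "y = h \<tau> X0" using key[OF X(3,4,2) tp] by simp
    then show "y \<in> (\<lambda>\<tau>. h \<tau> X0) ` pats k" using tp by blast
  qed
  have fin: "finite (regressive_values k g B)"
    using finite_subset[OF sub] pats_finite by blast
  have "card (regressive_values k g B) \<le> card ((\<lambda>\<tau>. h \<tau> X0) ` pats k)"
    using card_mono[OF _ sub] pats_finite by blast
  also have "\<dots> \<le> card (pats k)" by (rule card_image_le[OF pats_finite])
  also have "\<dots> \<le> ot k" by (rule card_pats)
  finally show ?thesis using infB fin by blast
qed


end
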